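(* Let $\mathcal{H}_X$ be a Hilbert space of dimension $d$ and $\mathcal{H}_R$ a reference Hilbert space. Let $U$ be a Haar-random target unitary on $\mathcal{H}_X$. Consider sets of training inputs $S_{\mathrm{in}}=\{|\psi_{\max}\rangle,|\psi_2\rangle,\dots,|\psi_t\rangle\}\subset\mathcal{H}_X\otimes\mathcal{H}_R$ where $|\psi_{\max}\rangle$ has Schmidt decomposition $|\psi_{\max}\rangle=\sum_{k=1}^{r_{\max}}\sqrt{c_k}\,|\xi_k\rangle_X|\zeta_k\rangle_R$ (with $r_{\max}$ the maximal Schmidt rank among the inputs), and every other input satisfies $|\psi_j\rangle\in\mathcal{H}_{S_{X,\max}}\otimes\mathcal{H}_R$, where $\mathcal{H}_{S_{X,\max}}=\mathrm{span}\{|\xi_1\rangle,\dots,|\xi_{r_{\max}}\rangle\}$. Let $T_t^{\mathrm{ld}}$ be the set of all such input sets, and let $V_S$ be a hypothesis unitary on $\mathcal{H}_X$ perfectly trained on the corresponding training set $S=\{(|\psi_j\rangle,(U\otimes I)|\psi_j\rangle)\}$. Then, with $\mathbb{E}_S^{\mathrm{ld}}$ denoting the expectation over $T_t^{\mathrm{ld}}$, $$\mathbb{E}_U\big[\mathbb{E}_S^{\mathrm{ld}}[R_U(V_S)]\big]\;\ge\;1-\frac{r_{\max}^2+d+1}{d(d+1)}.$$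
   Context: Perfect training means $|\langle\psi_j|(U^\dagger V_S\otimes I)|\psi_j\rangle|=1$ for all training inputs. The risk is $R_U(V)=\int\big(1-|\langle x|U^\dagger V|x\rangle|^2\big)\,dx$ over Haar-random pure states $|x\rangle\in\mathcal{H}_X$, equivalently $R_U(V)=1-\frac{d+|\mathrm{Tr}[U^\dagger V]|^2}{d(d+1)}$. $\mathbb{E}_U$ is over the Haar measure on $\mathcal{U}(d)$; $\mathbb{E}_S^{\mathrm{ld}}$ is over the normalized restriction of the product Fubini–Study measure to $T_t^{\mathrm{ld}}$. *)

theory Defs
  imports "HOL-Probability.Probability"
begin

text \<open>H_X = complex^'d (d = CARD('d)), H_R = complex^'r; H_X \<otimes> H_R = complex^('d \<times> 'r).
Operators on H_X are matrices complex^'d^'d.\<close>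

definition cinner :: "complex^'n::finite \<Rightarrow> complex^'n \<Rightarrow> complex" where
  "cinner x y = (\<Sum>i\<in>UNIV. cnj (x $ i) * y $ i)"

definition cadj :: "complex^'n::finite^'n \<Rightarrow> complex^'n^'n" where
  "cadj A = (\<chi> i j. cnj (A $ j $ i))"

definition unitary :: "complex^'n::finite^'n \<Rightarrow> bool" where
  "unitary U \<longleftrightarrow> U ** cadj U = mat 1 \<and> cadj U ** U = mat 1"

definition mtrace :: "complex^'n::finite^'n \<Rightarrow> complex" where
  "mtrace A = (\<Sum>i\<in>UNIV. A $ i $ i)"

definition tprod :: "complex^'d::finite \<Rightarrow> complex^'r::finite \<Rightarrow> complex^('d \<times> 'r)" where
  "tprod x y = (\<chi> p. x $ fst p * y $ snd p)"

definition tens_id :: "complex^'d::finite^'d \<Rightarrow> complex^('d \<times> 'r::finite) \<Rightarrow> complex^('d \<times> 'r)" where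
  "tens_id A \<psi> = (\<chi> p. \<Sum>j\<in>UNIV. A $ fst p $ j * \<psi> $ (j, snd p))"

definition orthonormal_fam :: "(nat \<Rightarrow> complex^'n::finite) \<Rightarrow> nat \<Rightarrow> bool" where
  "orthonormal_fam e r \<longleftrightarrow> (\<forall>k<r. \<forall>l<r. cinner (e k) (e l) = (if k = l then 1 else 0))"

definition schmidt_rank :: "complex^('d::finite \<times> 'r::finite) \<Rightarrow> nat" where
  "schmidt_rank \<psi> = (LEAST n. \<exists>a b. \<psi> = (\<Sum>k<n. tprod (a k) (b k)))"

text \<open>T_t^ld for a fixed maximal Schmidt rank r: lists of t unit vectors, the first one
(psi_max) having a Schmidt decomposition with r terms sum_k sqrt(c_k) xi_k (x) zeta_k (c_k > 0),
r being the maximal Schmidt rank, and every input lying in span{xi_k} (x) H_R.\<close>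
definition T_ld :: "nat \<Rightarrow> nat \<Rightarrow> (complex^('d::finite \<times> 'r::finite)) list set" where
  "T_ld r t = {\<psi>s. length \<psi>s = t \<and> t \<ge> 1 \<and> (\<forall>\<psi>\<in>set \<psi>s. cinner \<psi> \<psi> = 1) \<and>
     schmidt_rank (\<psi>s ! 0) = r \<and> (\<forall>\<psi>\<in>set \<psi>s. schmidt_rank \<psi> \<le> r) \<and>
     (\<exists>(\<xi>::nat \<Rightarrow> complex^'d) (\<zeta>::nat \<Rightarrow> complex^'r) (c::nat \<Rightarrow> real).
        orthonormal_fam \<xi> r \<and> orthonormal_fam \<zeta> r \<and> (\<forall>k<r. c k > 0) \<and>
        \<psi>s ! 0 = (\<Sum>k<r. sqrt (c k) *\<^sub>R tprod (\<xi> k) (\<zeta> k)) \<and>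
        (\<forall>j<t. \<exists>w::nat \<Rightarrow> complex^'r. \<psi>s ! j = (\<Sum>k<r. tprod (\<xi> k) (w k))))}"

definition training_set :: "complex^'d::finite^'d \<Rightarrow> (complex^('d \<times> 'r::finite)) list
    \<Rightarrow> ((complex^('d \<times> 'r)) \<times> (complex^('d \<times> 'r))) list" where
  "training_set U \<psi>s = map (\<lambda>\<psi>. (\<psi>, tens_id U \<psi>)) \<psi>s"

definition perfectly_trained :: "complex^'d::finite^'d \<Rightarrow> complex^'d^'d \<Rightarrow> (complex^('d \<times> 'r::finite)) list \<Rightarrow> bool" where
  "perfectly_trained U V \<psi>s \<longleftrightarrow>
     (\<forall>\<psi>\<in>set \<psi>s. cmod (cinner \<psi> (tens_id (cadj U ** V) \<psi>)) = 1)"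

text \<open>Risk, in the closed form given in the paper.\<close>
definition risk :: "complex^'d::finite^'d \<Rightarrow> complex^'d^'d \<Rightarrow> real" where
  "risk U V = 1 - (real CARD('d) + (cmod (mtrace (cadj U ** V)))\<^sup>2) /
                  (real CARD('d) * (real CARD('d) + 1))"

definition haar_unitary :: "(complex^'d::finite^'d) measure \<Rightarrow> bool" where
  "haar_unitary \<mu> \<longleftrightarrow> prob_space \<mu> \<and> sets \<mu> = sets borel \<and> space \<mu> = UNIV \<and>
     (AE U in \<mu>. unitary U) \<and>
     (\<forall>W. unitary W \<longrightarrow> distr \<mu> borel (\<lambda>U. W ** U) = \<mu> \<and> distr \<mu> borel (\<lambda>U. U ** W) = \<mu>)"

end

theory Submission
  imports Defs
begin


lemma cinner_add_right: "cinner x (y + z) = cinner x y + cinner x z"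
  by (simp add: cinner_def distrib_left sum.distrib)
lemma cinner_add_left: "cinner (x + y) z = cinner x z + cinner y z"
  by (simp add: cinner_def distrib_right sum.distrib)
lemma cinner_diff_right: "cinner x (y - z) = cinner x y - cinner x z"
  by (simp add: cinner_def right_diff_distrib sum_subtractf)
lemma cinner_diff_left: "cinner (x - y) z = cinner x z - cinner y z"
  by (simp add: cinner_def left_diff_distrib sum_subtractf)
lemma cinner_zero_right[simp]: "cinner x 0 = 0" by (simp add: cinner_def)
lemma cinner_zero_left[simp]: "cinner 0 x = 0" by (simp add: cinner_def)
lemma cinner_sum_right: "cinner x (\<Sum>k\<in>K. f k) = (\<Sum>k\<in>K. cinner x (f k))"
  by (induct K rule: infinite_finite_induct) (simp_all add: cinner_add_right)
lemma cinner_sum_left: "cinner (\<Sum>k\<in>K. f k) y = (\<Sum>k\<in>K. cinner (f k) y)"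
  by (induct K rule: infinite_finite_induct) (simp_all add: cinner_add_left)
lemma cinner_scale_right: "cinner x (c *s y) = c * cinner x y"
  by (simp add: cinner_def sum_distrib_left mult.left_commute)
lemma cinner_scale_left: "cinner (c *s x) y = cnj c * cinner x y"
  by (simp add: cinner_def sum_distrib_left mult.assoc)
lemma cinner_scaleR_right: "cinner x (a *\<^sub>R y) = of_real a * cinner x y"
  by (simp add: cinner_def sum_distrib_left) (simp add: scaleR_conv_of_real mult.left_commute)
lemma cinner_scaleR_left: "cinner (a *\<^sub>R x) y = of_real a * cinner x y"
  by (simp add: cinner_def sum_distrib_left) (simp add: scaleR_conv_of_real mult.assoc)
lemma cinner_cnj: "cnj (cinner x y) = cinner y x"
  by (simp add: cinner_def mult.commute)
lemma cinner_self: "cinner x x = of_real (\<Sum>i\<in>UNIV. (cmod (x $ i))\<^sup>2)"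
  unfolding cinner_def of_real_sum by (intro sum.cong refl) (subst complex_norm_square, rule mult.commute)
lemma cinner_self_eq0: "cinner x x = 0 \<Longrightarrow> x = 0"
proof -
  assume "cinner x x = 0"
  then have "(\<Sum>i\<in>UNIV. (cmod (x $ i))\<^sup>2) = 0" by (simp only: cinner_self of_real_eq_0_iff)
  then have "\<forall>i\<in>UNIV. (cmod (x $ i))\<^sup>2 = 0" using sum_nonneg_eq_0_iff[of UNIV "\<lambda>i. (cmod (x $ i))\<^sup>2"] by simp
  then show "x = 0" by (simp add: vec_eq_iff)
qed


lemma ifmult: "(if P then 1 else 0) * (z::complex) = (if P then z else 0)" by simp
lemma tens_id_add: "tens_id A (x + y) = tens_id A x + tens_id A y"
  by (simp add: tens_id_def vec_eq_iff distrib_left sum.distrib)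
lemma tens_id_sum: "tens_id A (\<Sum>k\<in>K. f k) = (\<Sum>k\<in>K. tens_id A (f k))"
  by (induct K rule: infinite_finite_induct) (auto simp: tens_id_add, simp_all add: tens_id_def vec_eq_iff)
lemma tens_id_scaleR: "tens_id A (a *\<^sub>R x) = a *\<^sub>R tens_id A x"
  by (simp add: tens_id_def vec_eq_iff) (simp add: scaleR_conv_of_real sum_distrib_left mult.left_commute)
lemma tens_id_scale: "tens_id A (c *s x) = c *s tens_id A x"
  by (simp add: tens_id_def vec_eq_iff sum_distrib_left mult.left_commute)
lemma tens_id_tprod: "tens_id A (tprod x y) = tprod (A *v x) y"
  by (simp add: tens_id_def tprod_def vec_eq_iff matrix_vector_mult_def sum_distrib_right mult.assoc)
lemma tens_id_mult: "tens_id (A ** B) \<psi> = tens_id A (tens_id B \<psi>)"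
proof -
  have "\<And>a b. (\<Sum>j\<in>UNIV. (\<Sum>k\<in>UNIV. A $ a $ k * B $ k $ j) * \<psi> $ (j, b)) = (\<Sum>k\<in>UNIV. A $ a $ k * (\<Sum>j\<in>UNIV. B $ k $ j * \<psi> $ (j, b)))"
    by (simp add: sum_distrib_left sum_distrib_right mult.assoc) (rule sum.swap)
  then show ?thesis by (simp add: tens_id_def matrix_matrix_mult_def vec_eq_iff)
qed
lemma tens_id_one: "tens_id (mat 1) \<psi> = \<psi>"
  by (simp add: tens_id_def mat_def vec_eq_iff ifmult)
lemma sum_UNIV_pair: "(\<Sum>p\<in>(UNIV::('a::finite\<times>'b::finite) set). F p) = (\<Sum>a\<in>UNIV. \<Sum>b\<in>UNIV. F (a,b))"
  unfolding sum.cartesian_product UNIV_Times_UNIV by simp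

lemma sum3_swap: "(\<Sum>a\<in>A. \<Sum>b\<in>B. \<Sum>j\<in>J. f a b j) = (\<Sum>j\<in>J. \<Sum>b\<in>B. \<Sum>a\<in>A. f a b j)"
proof -
  have "(\<Sum>a\<in>A. \<Sum>b\<in>B. \<Sum>j\<in>J. f a b j) = (\<Sum>a\<in>A. \<Sum>j\<in>J. \<Sum>b\<in>B. f a b j)"
    by (rule sum.cong[OF refl], rule sum.swap)
  also have "\<dots> = (\<Sum>j\<in>J. \<Sum>a\<in>A. \<Sum>b\<in>B. f a b j)" by (rule sum.swap)
  also have "\<dots> = (\<Sum>j\<in>J. \<Sum>b\<in>B. \<Sum>a\<in>A. f a b j)"
    by (rule sum.cong[OF refl], rule sum.swap)
  finally show ?thesis .
qed

lemma cinner_tens_id: "cinner (tens_id A x) y = cinner x (tens_id (cadj A) y)"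
proof -
  have "cinner (tens_id A x) y = (\<Sum>p\<in>UNIV. \<Sum>j\<in>UNIV. cnj (A $ fst p $ j) * cnj (x $ (j, snd p)) * y $ p)"
    by (simp add: cinner_def tens_id_def sum_distrib_right)
  also have "\<dots> = (\<Sum>a\<in>UNIV. \<Sum>b\<in>UNIV. \<Sum>j\<in>UNIV. cnj (A $ a $ j) * cnj (x $ (j, b)) * y $ (a,b))"
    by (simp add: sum_UNIV_pair)
  also have "\<dots> = (\<Sum>j\<in>UNIV. \<Sum>b\<in>UNIV. \<Sum>a\<in>UNIV. cnj (A $ a $ j) * cnj (x $ (j, b)) * y $ (a,b))"
    by (rule sum3_swap)
  also have "\<dots> = (\<Sum>p\<in>UNIV. \<Sum>a\<in>UNIV. cnj (x $ p) * (cnj (A $ a $ fst p) * y $ (a, snd p)))"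
    by (simp add: sum_UNIV_pair mult.commute mult.left_commute)
  also have "\<dots> = cinner x (tens_id (cadj A) y)"
    by (simp add: cinner_def tens_id_def cadj_def sum_distrib_left)
  finally show ?thesis .
qed


lemma cadj_mult: "cadj (A ** B) = cadj B ** cadj A"
  by (simp add: cadj_def matrix_matrix_mult_def vec_eq_iff mult.commute)
lemma cadj_cadj[simp]: "cadj (cadj A) = A"
  by (simp add: cadj_def vec_eq_iff)
lemma cadj_one[simp]: "cadj (mat 1) = mat 1"
  by (simp add: cadj_def vec_eq_iff mat_def)
lemma unitary_mult: "unitary A \<Longrightarrow> unitary B \<Longrightarrow> unitary (A ** B)"
  unfolding unitary_def cadj_mult
  by (metis matrix_mul_assoc matrix_mul_lid)
lemma unitary_cadj: "unitary A \<Longrightarrow> unitary (cadj A)"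
  unfolding unitary_def by simp
lemma unitary_if_left: "cadj A ** A = mat 1 \<Longrightarrow> unitary A"
  unfolding unitary_def using matrix_left_right_inverse by blast
lemma mtrace_comm: "mtrace (A ** B) = mtrace (B ** A)"
  unfolding mtrace_def matrix_matrix_mult_def
  by (simp add: mult.commute) (rule sum.swap)

lemma unitary_col: assumes "unitary A" shows "(\<Sum>q\<in>UNIV. (cmod (A $ q $ p))\<^sup>2) = 1"
proof -
  have "(cadj A ** A) $ p $ p = 1" using assms by (simp add: unitary_def mat_def)
  then have "(\<Sum>q\<in>UNIV. cnj (A $ q $ p) * A $ q $ p) = 1"
    by (simp add: cadj_def matrix_matrix_mult_def)
  moreover have "(\<Sum>q\<in>UNIV. cnj (A $ q $ p) * A $ q $ p) = of_real (\<Sum>q\<in>UNIV. (cmod (A $ q $ p))\<^sup>2)"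
    unfolding of_real_sum by (intro sum.cong refl) (subst complex_norm_square, rule mult.commute)
  ultimately show ?thesis by (metis of_real_eq_1_iff)
qed

lemma unitary_entry_le: assumes "unitary A" shows "cmod (A $ q $ p) \<le> 1"
proof -
  have "(cmod (A $ q $ p))\<^sup>2 \<le> (\<Sum>q\<in>UNIV. (cmod (A $ q $ p))\<^sup>2)"
    by (rule member_le_sum) auto
  then have "(cmod (A $ q $ p))\<^sup>2 \<le> 1" using unitary_col[OF assms] by simp
  then show ?thesis by (simp add: power_le_one_iff abs_le_iff power2_le_iff_abs_le)
qed

lemma unitary_trace_le: fixes A :: "complex^'n::finite^'n" assumes "unitary A" shows "cmod (mtrace A) \<le> real CARD('n)"
proof -
  have "cmod (mtrace A) \<le> (\<Sum>p\<in>(UNIV::'n set). cmod (A $ p $ p))"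
    unfolding mtrace_def by (rule norm_sum)
  also have "\<dots> \<le> (\<Sum>p\<in>(UNIV::'n set). 1)"
    by (rule sum_mono) (rule unitary_entry_le[OF assms])
  finally show ?thesis by simp
qed

lemma cinner_mv: "cinner (A *v x) y = cinner x (cadj A *v y)"
proof -
  have "cinner (A *v x) y = (\<Sum>i\<in>UNIV. \<Sum>j\<in>UNIV. cnj (A $ i $ j) * cnj (x $ j) * y $ i)"
    by (simp add: cinner_def matrix_vector_mult_def sum_distrib_right)
  also have "\<dots> = (\<Sum>j\<in>UNIV. \<Sum>i\<in>UNIV. cnj (A $ i $ j) * cnj (x $ j) * y $ i)"
    by (rule sum.swap)
  also have "\<dots> = cinner x (cadj A *v y)"
    by (simp add: cinner_def matrix_vector_mult_def cadj_def sum_distrib_left mult.assoc mult.left_commute)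
  finally show ?thesis .
qed

lemma mv_mult: "(A ** B) *v x = A *v (B *v x)"
  by (simp add: matrix_vector_mul_assoc)


definition contr :: "complex^('d::finite \<times> 'r::finite) \<Rightarrow> complex^'r \<Rightarrow> complex^'d" where
  "contr \<psi> z = (\<chi> i. \<Sum>b\<in>UNIV. cnj (z $ b) * \<psi> $ (i, b))"

lemma contr_add: "contr (x + y) z = contr x z + contr y z"
  by (simp add: contr_def vec_eq_iff distrib_left sum.distrib)
lemma contr_zero[simp]: "contr 0 z = 0"
  by (simp add: contr_def vec_eq_iff)
lemma contr_sum: "contr (\<Sum>k\<in>K. f k) z = (\<Sum>k\<in>K. contr (f k) z)"
  by (induct K rule: infinite_finite_induct) (simp_all add: contr_add)
lemma contr_scaleR: "contr (a *\<^sub>R x) z = a *\<^sub>R contr x z"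
  by (simp add: contr_def vec_eq_iff) (simp add: scaleR_conv_of_real sum_distrib_left mult.left_commute)
lemma contr_scale: "contr (c *s x) z = c *s contr x z"
  by (simp add: contr_def vec_eq_iff sum_distrib_left mult.left_commute)
lemma contr_tprod: "contr (tprod x y) z = cinner z y *s x"
  by (simp add: contr_def tprod_def cinner_def vec_eq_iff sum_distrib_left mult.commute mult.left_commute)

lemma perfect_eig:
  fixes W :: "complex^'d::finite^'d" and \<zeta> :: "nat \<Rightarrow> complex^'r::finite"
  assumes W: "unitary W" and on: "orthonormal_fam \<zeta> r" and c: "\<forall>k<r. c k > 0"
    and psi: "\<psi> = (\<Sum>k<r. sqrt (c k) *\<^sub>R tprod (\<xi> k) (\<zeta> k))"
    and n1: "cinner \<psi> \<psi> = 1" and pt: "cmod (cinner \<psi> (tens_id W \<psi>)) = 1"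
  shows "\<exists>lam. cmod lam = 1 \<and> (\<forall>k<r. W *v \<xi> k = lam *s \<xi> k)"
proof -
  define \<phi> where "\<phi> = tens_id W \<psi>"
  define lam where "lam = cinner \<psi> \<phi>"
  have l1: "cmod lam = 1" using pt by (simp add: lam_def \<phi>_def)
  have pp: "cinner \<phi> \<phi> = 1"
    using W n1 by (simp add: \<phi>_def cinner_tens_id tens_id_mult[symmetric] unitary_def tens_id_one)
  have pq: "cinner \<phi> \<psi> = cnj lam" by (simp add: lam_def cinner_cnj)
  have ll: "cnj lam * lam = 1"
    using l1 by (metis complex_norm_square mult.commute of_real_1 power_one)
  have "cinner (\<phi> - lam *s \<psi>) (\<phi> - lam *s \<psi>) = cinner \<phi> \<phi> - lam * cinner \<phi> \<psi> - cnj lam * cinner \<psi> \<phi> + cnj lam * lam * cinner \<psi> \<psi>"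
    by (simp add: cinner_diff_left cinner_diff_right cinner_scale_left cinner_scale_right algebra_simps)
  also have "\<dots> = 0" using pp pq n1 ll by (simp add: lam_def[symmetric] mult.commute)
  finally have eq: "\<phi> = lam *s \<psi>" using cinner_self_eq0 by fastforce
  have "W *v \<xi> l = lam *s \<xi> l" if l: "l < r" for l
  proof -
    have delta: "\<And>(v::nat \<Rightarrow> complex^'d). (\<Sum>k<r. sqrt (c k) *\<^sub>R (cinner (\<zeta> l) (\<zeta> k) *s v k)) = sqrt (c l) *\<^sub>R v l"
    proof -
      fix v :: "nat \<Rightarrow> complex^'d"
      have "(\<Sum>k<r. sqrt (c k) *\<^sub>R (cinner (\<zeta> l) (\<zeta> k) *s v k)) = (\<Sum>k<r. if l = k then sqrt (c k) *\<^sub>R v k else 0)"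
        using on unfolding orthonormal_fam_def by (intro sum.cong refl) (auto simp: l)
      also have "\<dots> = sqrt (c l) *\<^sub>R v l" using l by simp
      finally show "(\<Sum>k<r. sqrt (c k) *\<^sub>R (cinner (\<zeta> l) (\<zeta> k) *s v k)) = sqrt (c l) *\<^sub>R v l" .
    qed
    have "contr \<phi> (\<zeta> l) = sqrt (c l) *\<^sub>R (W *v \<xi> l)"
      by (simp add: \<phi>_def psi tens_id_sum tens_id_scaleR tens_id_tprod contr_sum contr_scaleR contr_tprod delta)
    moreover have "contr (lam *s \<psi>) (\<zeta> l) = sqrt (c l) *\<^sub>R (lam *s \<xi> l)"
    proof -
      have "contr (lam *s \<psi>) (\<zeta> l) = lam *s (sqrt (c l) *\<^sub>R \<xi> l)"
        by (simp add: contr_scale psi contr_sum contr_scaleR contr_tprod delta)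
      then show ?thesis by (simp add: vec_eq_iff scaleR_conv_of_real mult.left_commute)
    qed
    ultimately have "sqrt (c l) *\<^sub>R (W *v \<xi> l) = sqrt (c l) *\<^sub>R (lam *s \<xi> l)" using eq by metis
    moreover have "sqrt (c l) \<noteq> 0" using c l by force
    ultimately show ?thesis by simp
  qed
  then show ?thesis using l1 by blast
qed


lemma scale_decomp: "(c::complex) *s (v::complex^'n::finite) = Re c *\<^sub>R v + Im c *\<^sub>R (\<i> *s v)"
  by (simp add: vec_eq_iff) (simp add: scaleR_conv_of_real complex_eq_iff)

lemma exists_orth:
  fixes e :: "nat \<Rightarrow> complex^'d::finite"
  assumes on: "orthonormal_fam e n" and nd: "n < CARD('d)"
  shows "\<exists>v. cinner v v = 1 \<and> (\<forall>k<n. cinner (e k) v = 0)"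
proof -
  define S where "S = e ` {..<n} \<union> (\<lambda>k. \<i> *s e k) ` {..<n}"
  have fS: "finite S" by (simp add: S_def)
  have cS: "card S \<le> 2 * n"
  proof -
    have "card S \<le> card (e ` {..<n}) + card ((\<lambda>k. \<i> *s e k) ` {..<n})"
      unfolding S_def by (rule card_Un_le)
    also have "\<dots> \<le> n + n" by (intro add_mono) (simp_all add: card_image_le[THEN order_trans])
    finally show ?thesis by simp
  qed
  have "span S \<noteq> UNIV"
  proof
    assume "span S = UNIV"
    then have "dim (UNIV :: (complex^'d) set) \<le> card S" using dim_le_card[of UNIV S] fS by simp
    then have "CARD('d) * 2 \<le> 2 * n" using cS by simp
    then show False using nd by simp
  qed
  then obtain y where y: "y \<notin> span S" by blast
  define L where "L = (\<Sum>k<n. cinner (e k) y *s e k)"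
  have "L \<in> span S"
    unfolding L_def
  proof (rule span_sum)
    fix k assume k: "k \<in> {..<n}"
    have "e k \<in> span S" "\<i> *s e k \<in> span S" using k by (auto simp: S_def intro!: span_base)
    then show "cinner (e k) y *s e k \<in> span S"
      by (subst scale_decomp) (intro span_add span_scale)
  qed
  define v0 where "v0 = y - L"
  have v0nz: "v0 \<noteq> 0" using y \<open>L \<in> span S\<close> unfolding v0_def by auto
  have orth0: "cinner (e l) v0 = 0" if l: "l < n" for l
  proof -
    have "cinner (e l) L = (\<Sum>k<n. cinner (e k) y * cinner (e l) (e k))"
      by (simp add: L_def cinner_sum_right cinner_scale_right)
    also have "\<dots> = (\<Sum>k<n. if l = k then cinner (e k) y else 0)"
      using on l unfolding orthonormal_fam_def by (intro sum.cong refl) auto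
    also have "\<dots> = cinner (e l) y" using l by simp
    finally show ?thesis by (simp add: v0_def cinner_diff_right)
  qed
  define s where "s = (\<Sum>i\<in>UNIV. (cmod (v0 $ i))\<^sup>2)"
  have s0: "cinner v0 v0 = of_real s" by (simp add: s_def cinner_self)
  have "s \<noteq> 0" using s0 cinner_self_eq0 v0nz by force
  moreover have "s \<ge> 0" unfolding s_def by (intro sum_nonneg) simp
  ultimately have spos: "s > 0" by simp
  define v where "v = of_real (1 / sqrt s) *s v0"
  have "cinner v v = of_real (1 / sqrt s) * of_real (1 / sqrt s) * of_real s"
    by (simp add: v_def cinner_scale_left cinner_scale_right s0)
  also have "\<dots> = 1" using spos
    by (simp flip: of_real_mult add: real_sqrt_mult_self)
  finally have "cinner v v = 1" .
  moreover have "\<forall>k<n. cinner (e k) v = 0" using orth0 by (simp add: v_def cinner_scale_right)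
  ultimately show ?thesis by blast
qed

lemma extend_onb:
  fixes \<xi> :: "nat \<Rightarrow> complex^'d::finite"
  assumes on: "orthonormal_fam \<xi> r" and rd: "r \<le> CARD('d)"
  shows "\<exists>e. orthonormal_fam e CARD('d) \<and> (\<forall>k<r. e k = \<xi> k)"
proof -
  have "\<exists>e. orthonormal_fam e n \<and> (\<forall>k<r. e k = \<xi> k)" if "r \<le> n" "n \<le> CARD('d)" for n
    using that
  proof (induction n rule: dec_induct)
    case base
    then show ?case using on by blast
  next
    case (step n)
    then obtain e where e: "orthonormal_fam e n" "\<forall>k<r. e k = \<xi> k" by auto
    obtain v where v: "cinner v v = 1" "\<forall>k<n. cinner (e k) v = 0"
      using exists_orth[OF e(1)] step by auto
    have v': "\<forall>k<n. cinner v (e k) = 0" using v(2) cinner_cnj by (metis complex_cnj_zero)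
    have "orthonormal_fam (e(n := v)) (Suc n)"
      unfolding orthonormal_fam_def
    proof (intro allI impI)
      fix k l assume "k < Suc n" "l < Suc n"
      then show "cinner ((e(n := v)) k) ((e(n := v)) l) = (if k = l then 1 else 0)"
        using e(1) v v' unfolding orthonormal_fam_def
        by (cases "k = n"; cases "l = n") (auto simp: less_Suc_eq)
    qed
    moreover have "\<forall>k<r. (e(n := v)) k = \<xi> k" using e(2) step by auto
    ultimately show ?case by blast
  qed
  then show ?thesis using rd by blast
qed


lemma multif: "(x::complex) * (if P then 1 else 0) = (if P then x else 0)" by simp
lemma ifmult2: "(if P then (a::complex) else 0) * b = (if P then a * b else 0)" by simp
lemma multif2: "(a::complex) * (if P then b else 0) = (if P then a * b else 0)" by simp
lemma cnjif: "cnj (if P then (a::complex) else 0) = (if P then cnj a else 0)" by simp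
lemma mv_axis: "(A::complex^'n::finite^'n) *v axis q 1 = (\<chi> p. A $ p $ q)"
  by (simp add: matrix_vector_mult_def axis_def vec_eq_iff multif)

locale idxloc =
  fixes idx :: "'d::finite \<Rightarrow> nat"
  assumes bij: "bij_betw idx (UNIV::'d set) {..<CARD('d)}"
begin

definition ix :: "nat \<Rightarrow> 'd" where "ix = inv_into UNIV idx"

lemma idx_lt[simp]: "idx p < CARD('d)"
  using bij bij_betwE by blast
lemma idx_ix[simp]: "m < CARD('d) \<Longrightarrow> idx (ix m) = m"
  unfolding ix_def using bij bij_betw_inv_into_right by fastforce
lemma ix_idx[simp]: "ix (idx p) = p"
  unfolding ix_def using bij bij_betw_inv_into_left by fastforce
lemma idx_eq_iff[simp]: "idx p = idx q \<longleftrightarrow> p = q"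
  by (metis ix_idx)
lemma idx_eq_m: "m < CARD('d) \<Longrightarrow> idx k = m \<longleftrightarrow> k = ix m"
  by auto

lemma sum_idx: "(\<Sum>p\<in>UNIV. f (idx p)) = (\<Sum>j<CARD('d). f j)"
  using sum.reindex_bij_betw[OF bij] .

lemma delta_idx: "m < CARD('d) \<Longrightarrow> (\<Sum>k\<in>UNIV. if idx k = m then f k else 0) = f (ix m)"
  by (simp add: idx_eq_m)

definition Bm :: "(nat \<Rightarrow> complex^'d) \<Rightarrow> complex^'d^'d" where
  "Bm e = (\<chi> i q. e (idx q) $ i)"

lemma Bm_unitary:
  assumes on: "orthonormal_fam e CARD('d)"
  shows "unitary (Bm e)"
proof (rule unitary_if_left)
  show "cadj (Bm e) ** Bm e = mat 1"
  proof (simp add: vec_eq_iff, intro allI)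
    fix p q
    have "(cadj (Bm e) ** Bm e) $ p $ q = cinner (e (idx p)) (e (idx q))"
      by (simp add: cadj_def Bm_def matrix_matrix_mult_def cinner_def)
    also have "\<dots> = mat 1 $ p $ q" using on unfolding orthonormal_fam_def by (simp add: mat_def)
    finally show "(cadj (Bm e) ** Bm e) $ p $ q = mat 1 $ p $ q" .
  qed
qed

lemma Bm_axis: "Bm e *v axis q 1 = e (idx q)"
  by (simp add: Bm_def mv_axis)

lemma Bm_e: "k < CARD('d) \<Longrightarrow> Bm e *v axis (ix k) 1 = e k"
  by (simp add: Bm_axis)

lemma cadjBm_e:
  assumes on: "orthonormal_fam e CARD('d)" and k: "k < CARD('d)"
  shows "cadj (Bm e) *v e k = axis (ix k) 1"
proof -
  have "cadj (Bm e) *v e k = (cadj (Bm e) ** Bm e) *v axis (ix k) 1"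
    using k by (simp add: matrix_vector_mul_assoc[symmetric] Bm_e)
  also have "\<dots> = axis (ix k) 1" using Bm_unitary[OF on] by (simp add: unitary_def)
  finally show ?thesis .
qed

definition Dm :: "(nat \<Rightarrow> nat) \<Rightarrow> (nat \<Rightarrow> complex) \<Rightarrow> complex^'d^'d" where
  "Dm \<tau> \<sigma> = (\<chi> p q. if idx p = \<tau> (idx q) then \<sigma> (idx q) else 0)"

lemma Dm_unitary:
  assumes inj: "inj_on \<tau> {..<CARD('d)}" and rng: "\<And>j. j < CARD('d) \<Longrightarrow> \<tau> j < CARD('d)"
    and sg: "\<And>j. j < CARD('d) \<Longrightarrow> cnj (\<sigma> j) * \<sigma> j = 1"
  shows "unitary (Dm \<tau> \<sigma>)"
proof (rule unitary_if_left)
  show "cadj (Dm \<tau> \<sigma>) ** Dm \<tau> \<sigma> = mat 1"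
  proof (simp add: vec_eq_iff, intro allI)
    fix p q
    have "(cadj (Dm \<tau> \<sigma>) ** Dm \<tau> \<sigma>) $ p $ q =
       (\<Sum>k\<in>UNIV. if idx k = \<tau> (idx p) then (if idx k = \<tau> (idx q) then cnj (\<sigma> (idx p)) * \<sigma> (idx q) else 0) else 0)"
      by (simp add: cadj_def Dm_def matrix_matrix_mult_def cnjif ifmult2 multif2) (rule sum.cong[OF refl], auto)
    also have "\<dots> = (if \<tau> (idx p) = \<tau> (idx q) then cnj (\<sigma> (idx p)) * \<sigma> (idx q) else 0)"
      by (subst delta_idx) (simp_all add: rng)
    also have "\<dots> = mat 1 $ p $ q"
      using inj_onD[OF inj, of "idx p" "idx q"] sg[of "idx p"] by (auto simp: mat_def)
    finally show "(cadj (Dm \<tau> \<sigma>) ** Dm \<tau> \<sigma>) $ p $ q = mat 1 $ p $ q" .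
  qed
qed

lemma Dm_axis: "Dm \<tau> \<sigma> *v axis q 1 = (\<chi> p. if idx p = \<tau> (idx q) then \<sigma> (idx q) else 0)"
  by (simp add: Dm_def mv_axis)

lemma Dm_fix: "k < CARD('d) \<Longrightarrow> \<tau> k = k \<Longrightarrow> \<sigma> k = 1 \<Longrightarrow> Dm \<tau> \<sigma> *v axis (ix k) 1 = axis (ix k) 1"
  by (subst Dm_axis) (simp add: axis_def vec_eq_iff idx_eq_m)

lemma trace_Dm:
  assumes rng: "\<And>j. j < CARD('d) \<Longrightarrow> \<tau> j < CARD('d)"
  shows "mtrace (cadj (Dm \<tau> \<sigma>) ** A) = (\<Sum>j<CARD('d). cnj (\<sigma> j) * A $ ix (\<tau> j) $ ix j)"
proof -
  have "mtrace (cadj (Dm \<tau> \<sigma>) ** A) = (\<Sum>q\<in>UNIV. \<Sum>k\<in>UNIV. if idx k = \<tau> (idx q) then cnj (\<sigma> (idx q)) * A $ k $ q else 0)"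
    by (simp add: mtrace_def cadj_def Dm_def matrix_matrix_mult_def cnjif ifmult2)
  also have "\<dots> = (\<Sum>q\<in>UNIV. cnj (\<sigma> (idx q)) * A $ ix (\<tau> (idx q)) $ ix (idx q))"
    by (intro sum.cong refl, subst delta_idx) (simp_all add: rng)
  also have "\<dots> = (\<Sum>j<CARD('d). cnj (\<sigma> j) * A $ ix (\<tau> j) $ ix j)"
    by (rule sum_idx)
  finally show ?thesis .
qed

end


lemma parallelogram_c: "(cmod (c + y))\<^sup>2 + (cmod (c - y))\<^sup>2 = 2 * (cmod c)\<^sup>2 + 2 * (cmod y)\<^sup>2"
  unfolding cmod_power2 by (simp add: power2_eq_square algebra_simps)

lemma aux: assumes h: "Q + P = 2*C + 2*Y" shows "(z::real) * (P + S) + z * (Q + S) = 2 * z * (C + (S + Y))"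
proof -
  have "z * (P + S) + z * (Q + S) = z * (Q + P) + 2 * z * S" by (simp add: algebra_simps)
  also have "\<dots> = z * (2*C + 2*Y) + 2 * z * S" using h by simp
  also have "\<dots> = 2 * z * (C + (S + Y))" by (simp add: algebra_simps)
  finally show ?thesis .
qed

lemma sign_sum:
  "(\<Sum>s\<in>PiE {..<m} (\<lambda>_. {-1, 1::real}). (cmod (c + (\<Sum>j<m. of_real (s j) * y j)))\<^sup>2)
     = 2 ^ m * ((cmod c)\<^sup>2 + (\<Sum>j<m. (cmod (y j))\<^sup>2))"
proof (induction m arbitrary: c)
  case 0
  then show ?case by simp
next
  case (Suc m)
  let ?P = "PiE {..<m} (\<lambda>_. {-1, 1::real})"
  let ?F = "\<lambda>s. (cmod (c + (\<Sum>j<Suc m. of_real (s j) * y j)))\<^sup>2"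
  have PE: "PiE {..<Suc m} (\<lambda>_. {-1, 1::real}) = (\<lambda>(b, g). g(m := b)) ` ({-1, 1} \<times> ?P)"
    using PiE_insert_eq[of m "{..<m}" "\<lambda>_. {-1, 1::real}"] by (simp add: lessThan_Suc)
  have inj: "inj_on (\<lambda>(b, g). g(m := b)) ({-1, 1::real} \<times> ?P)"
    using inj_combinator[of m "{..<m}" "\<lambda>_. {-1, 1::real}"] by simp
  have "(\<Sum>s\<in>PiE {..<Suc m} (\<lambda>_. {-1, 1::real}). ?F s) = (\<Sum>(b, g)\<in>{-1, 1::real} \<times> ?P. ?F (g(m := b)))"
    unfolding PE by (subst sum.reindex[OF inj]) (simp add: case_prod_unfold)
  also have "\<dots> = (\<Sum>b\<in>{-1, 1::real}. \<Sum>g\<in>?P. (cmod ((c + of_real b * y m) + (\<Sum>j<m. of_real (g j) * y j)))\<^sup>2)"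
    unfolding sum.cartesian_product[symmetric]
  proof (intro sum.cong refl)
    fix b g assume "g \<in> ?P"
    have "(\<Sum>j<m. of_real ((g(m := b)) j) * y j) = (\<Sum>j<m. of_real (g j) * y j)"
      by (intro sum.cong refl) auto
    then show "?F (g(m := b)) = (cmod ((c + of_real b * y m) + (\<Sum>j<m. of_real (g j) * y j)))\<^sup>2"
      by (simp add: algebra_simps)
  qed
  also have "\<dots> = (\<Sum>b\<in>{-1, 1::real}. 2 ^ m * ((cmod (c + of_real b * y m))\<^sup>2 + (\<Sum>j<m. (cmod (y j))\<^sup>2)))"
    by (simp only: Suc.IH)
  also have "\<dots> = 2 ^ m * ((cmod (c - y m))\<^sup>2 + (\<Sum>j<m. (cmod (y j))\<^sup>2)) + 2 ^ m * ((cmod (c + y m))\<^sup>2 + (\<Sum>j<m. (cmod (y j))\<^sup>2))"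
    by simp
  also have "\<dots> = 2 ^ Suc m * ((cmod c)\<^sup>2 + (\<Sum>j<Suc m. (cmod (y j))\<^sup>2))"
    using aux[OF parallelogram_c[of c "y m"], of "2 ^ m" "\<Sum>j<m. (cmod (y j))\<^sup>2"] by simp
  finally show ?case .
qed

lemma shift_sum:
  assumes j: "j < (m::nat)"
  shows "(\<Sum>a<m. f ((j + a) mod m)) = (\<Sum>i<m. f i)"
proof -
  have inj: "inj_on (\<lambda>a. (j + a) mod m) {..<m}"
  proof
    fix a b assume a: "a \<in> {..<m}" and b: "b \<in> {..<m}" and e: "(j + a) mod m = (j + b) mod m"
    have rec: "((j + x) mod m + (m - j)) mod m = x" if "x < m" for x
    proof -
      have "((j + x) mod m + (m - j)) mod m = (j + x + (m - j)) mod m" by (rule mod_add_left_eq)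
      also have "j + x + (m - j) = x + m" using j by simp
      finally show ?thesis using that by simp
    qed
    have "a = ((j + a) mod m + (m - j)) mod m" using rec[of a] a by simp
    also have "\<dots> = ((j + b) mod m + (m - j)) mod m" by (simp only: e)
    also have "\<dots> = b" using rec[of b] b by simp
    finally show "a = b" .
  qed
  have sub: "(\<lambda>a. (j + a) mod m) ` {..<m} \<subseteq> {..<m}"
  proof
    fix x assume "x \<in> (\<lambda>a. (j + a) mod m) ` {..<m}"
    then obtain a where "x = (j + a) mod m" by blast
    moreover have "m > 0" using j by simp
    ultimately show "x \<in> {..<m}" by simp
  qed
  have "(\<lambda>a. (j + a) mod m) ` {..<m} = {..<m}"
    by (rule endo_inj_surj[OF _ sub inj]) simp
  then show ?thesis using sum.reindex[OF inj, of f] by simp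
qed


lemma sum_split_nat: "(\<Sum>j<r + (m::nat). f j) = (\<Sum>j<r. f j) + (\<Sum>i<m. f (r + i))"
  by (induction m) (simp_all add: add.assoc)

lemma mv_scale: "(M::complex^'n::finite^'n) *v (c *s v) = c *s (M *v v)"
  by (simp add: matrix_vector_mult_def vec_eq_iff sum_distrib_left mult.left_commute)

lemma mod_shift_inj:
  assumes j: "j < (m::nat)" and x: "x < m" and y: "y < m" and e: "(x + j) mod m = (y + j) mod m"
  shows "x = y"
proof -
  have rec: "((j + x) mod m + (m - j)) mod m = x" if "x < m" for x
  proof -
    have "((j + x) mod m + (m - j)) mod m = (j + x + (m - j)) mod m" by (rule mod_add_left_eq)
    also have "j + x + (m - j) = x + m" using j by simp
    finally show ?thesis using that by simp
  qed
  have e': "(j + x) mod m = (j + y) mod m" using e by (simp add: add.commute)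
  have "x = ((j + x) mod m + (m - j)) mod m" using rec[of x] x by simp
  also have "\<dots> = ((j + y) mod m + (m - j)) mod m" by (simp only: e')
  also have "\<dots> = y" using rec[of y] y by simp
  finally show ?thesis .
qed

context idxloc begin

definition tau :: "nat \<Rightarrow> nat \<Rightarrow> nat \<Rightarrow> nat" where
  "tau r a j = (if j < r then j else r + (j - r + a) mod (CARD('d) - r))"
definition sig :: "nat \<Rightarrow> (nat \<Rightarrow> real) \<Rightarrow> nat \<Rightarrow> complex" where
  "sig r s j = (if j < r then 1 else of_real (s (j - r)))"

lemma tau_rng: "r < CARD('d) \<Longrightarrow> j < CARD('d) \<Longrightarrow> tau r a j < CARD('d)"
proof -
  assume r: "r < CARD('d)" and j: "j < CARD('d)"
  show ?thesis
  proof (cases "j < r")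
    case True then show ?thesis using r by (simp add: tau_def)
  next
    case False
    have "(j - r + a) mod (CARD('d) - r) < CARD('d) - r" using r by simp
    moreover have "tau r a j = r + (j - r + a) mod (CARD('d) - r)" using False by (simp add: tau_def)
    ultimately show ?thesis using r by linarith
  qed
qed

lemma tau_inj: assumes r: "r < CARD('d)" and a: "a < CARD('d) - r"
  shows "inj_on (tau r a) {..<CARD('d)}"
proof
  fix x y assume x: "x \<in> {..<CARD('d)}" and y: "y \<in> {..<CARD('d)}" and e: "tau r a x = tau r a y"
  show "x = y"
  proof (cases "x < r")
    case True
    then show ?thesis using e by (cases "y < r") (auto simp: tau_def)
  next
    case False
    then show ?thesis
    proof (cases "y < r")
      case True
      then show ?thesis using e False by (auto simp: tau_def)
    next
      case yF: False
      have eq: "(x - r + a) mod (CARD('d) - r) = (y - r + a) mod (CARD('d) - r)"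
        using e False yF by (simp add: tau_def)
      have "x - r = y - r"
        by (rule mod_shift_inj[OF a _ _ eq]) (use x y False yF in auto)
      then show ?thesis using False yF by simp
    qed
  qed
qed

lemma sig_unit: "s \<in> PiE {..<CARD('d) - r} (\<lambda>_. {-1, 1::real}) \<Longrightarrow> j < CARD('d) \<Longrightarrow> cnj (sig r s j) * sig r s j = 1"
proof -
  assume s: "s \<in> PiE {..<CARD('d) - r} (\<lambda>_. {-1, 1::real})" and j: "j < CARD('d)"
  show ?thesis
  proof (cases "j < r")
    case False
    then have "s (j - r) \<in> {-1, 1}" using s j by (auto simp: PiE_def Pi_def)
    then show ?thesis using False by (auto simp: sig_def)
  qed (simp add: sig_def)
qed

definition Gm :: "(nat \<Rightarrow> complex^'d) \<Rightarrow> nat \<Rightarrow> (nat \<Rightarrow> real) \<times> nat \<Rightarrow> complex^'d^'d" where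
  "Gm e r x = Bm e ** Dm (tau r (snd x)) (sig r (fst x)) ** cadj (Bm e)"

lemma Gm_props:
  assumes on: "orthonormal_fam e CARD('d)" and r: "r < CARD('d)"
    and x: "x \<in> PiE {..<CARD('d) - r} (\<lambda>_. {-1, 1::real}) \<times> {..<CARD('d) - r}"
  shows "unitary (Gm e r x)" "\<forall>k<r. Gm e r x *v e k = e k"
proof -
  obtain s a where xs: "x = (s, a)" by (cases x)
  have s: "s \<in> PiE {..<CARD('d) - r} (\<lambda>_. {-1, 1::real})" and a: "a < CARD('d) - r" using x xs by auto
  have uD: "unitary (Dm (tau r a) (sig r s))"
    by (rule Dm_unitary[OF tau_inj[OF r a]]) (auto intro: tau_rng[OF r] sig_unit[OF s])
  show "unitary (Gm e r x)"
    unfolding Gm_def xs using Bm_unitary[OF on] uD by (simp add: unitary_mult unitary_cadj)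
  show "\<forall>k<r. Gm e r x *v e k = e k"
  proof (intro allI impI)
    fix k assume k: "k < r"
    then have kd: "k < CARD('d)" using r by simp
    have "Gm e r x *v e k = Bm e *v (Dm (tau r a) (sig r s) *v (cadj (Bm e) *v e k))"
      by (simp add: Gm_def xs matrix_vector_mul_assoc[symmetric])
    also have "\<dots> = e k"
      using k kd by (simp add: cadjBm_e[OF on kd] Dm_fix tau_def sig_def Bm_e)
    finally show "Gm e r x *v e k = e k" .
  qed
qed

end


context idxloc begin

lemma A_col:
  assumes on: "orthonormal_fam e CARD('d)" and r: "r < CARD('d)"
    and eig: "\<forall>k<r. W *v e k = lam *s e k" and k: "k < r"
  shows "(cadj (Bm e) ** W ** Bm e) $ p $ ix k = (if p = ix k then lam else 0)"
proof -
  have kd: "k < CARD('d)" using k r by simp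
  have "(cadj (Bm e) ** W ** Bm e) *v axis (ix k) 1 = cadj (Bm e) *v (W *v (Bm e *v axis (ix k) 1))"
    by (simp add: matrix_vector_mul_assoc[symmetric])
  also have "\<dots> = lam *s axis (ix k) 1"
    using eig k by (simp add: Bm_e[OF kd] mv_scale cadjBm_e[OF on kd])
  finally have "(cadj (Bm e) ** W ** Bm e) *v axis (ix k) 1 = lam *s axis (ix k) 1" .
  then have "((cadj (Bm e) ** W ** Bm e) *v axis (ix k) 1) $ p = (lam *s axis (ix k) 1) $ p" by simp
  then show ?thesis by (subst (asm) mv_axis) (simp add: axis_def)
qed

lemma trace_Gm:
  assumes on: "orthonormal_fam e CARD('d)" and r: "r < CARD('d)"
    and eig: "\<forall>k<r. W *v e k = lam *s e k" and a: "a < CARD('d) - r"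
  shows "mtrace (cadj (Gm e r (s, a)) ** W) = of_nat r * lam +
     (\<Sum>i<CARD('d) - r. of_real (s i) * (cadj (Bm e) ** W ** Bm e) $ ix (r + (i + a) mod (CARD('d) - r)) $ ix (r + i))"
proof -
  define B where "B = Bm e"
  define D where "D = Dm (tau r a) (sig r s)"
  define A where "A = cadj B ** W ** B"
  define m where "m = CARD('d) - r"
  have dm: "CARD('d) = r + m" using r by (simp add: m_def)
  have "mtrace (cadj (Gm e r (s, a)) ** W) = mtrace (B ** ((cadj D ** cadj B) ** W))"
    by (simp add: Gm_def B_def D_def cadj_mult matrix_mul_assoc)
  also have "\<dots> = mtrace (((cadj D ** cadj B) ** W) ** B)" by (rule mtrace_comm)
  also have "\<dots> = mtrace (cadj D ** A)" by (simp add: A_def matrix_mul_assoc)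
  also have "\<dots> = (\<Sum>j<CARD('d). cnj (sig r s j) * A $ ix (tau r a j) $ ix j)"
    unfolding D_def by (rule trace_Dm) (rule tau_rng[OF r])
  also have "\<dots> = (\<Sum>j<r. cnj (sig r s j) * A $ ix (tau r a j) $ ix j) +
      (\<Sum>i<m. cnj (sig r s (r + i)) * A $ ix (tau r a (r + i)) $ ix (r + i))"
    unfolding dm by (rule sum_split_nat)
  also have "(\<Sum>j<r. cnj (sig r s j) * A $ ix (tau r a j) $ ix j) = (\<Sum>j<r. lam)"
    by (intro sum.cong refl) (simp add: sig_def tau_def A_def B_def A_col[OF on r eig])
  also have "(\<Sum>i<m. cnj (sig r s (r + i)) * A $ ix (tau r a (r + i)) $ ix (r + i)) =
     (\<Sum>i<m. of_real (s i) * A $ ix (r + (i + a) mod m) $ ix (r + i))"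
    by (intro sum.cong refl) (simp add: sig_def tau_def m_def)
  finally show ?thesis by (simp add: A_def B_def m_def)
qed

lemma col_bound:
  assumes uA: "unitary A" and r: "r \<le> CARD('d)"
  shows "(\<Sum>i<CARD('d) - r. (cmod (A $ ix (r + i) $ q))\<^sup>2) \<le> 1"
proof -
  define m where "m = CARD('d) - r"
  have dm: "CARD('d) = r + m" using r by (simp add: m_def)
  have "1 = (\<Sum>p\<in>UNIV. (cmod (A $ ix (idx p) $ q))\<^sup>2)" using unitary_col[OF uA] by simp
  also have "\<dots> = (\<Sum>j<CARD('d). (cmod (A $ ix j $ q))\<^sup>2)" by (rule sum_idx)
  also have "\<dots> = (\<Sum>j<r. (cmod (A $ ix j $ q))\<^sup>2) + (\<Sum>i<m. (cmod (A $ ix (r + i) $ q))\<^sup>2)"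
    unfolding dm by (rule sum_split_nat)
  finally have "1 = (\<Sum>j<r. (cmod (A $ ix j $ q))\<^sup>2) + (\<Sum>i<m. (cmod (A $ ix (r + i) $ q))\<^sup>2)" .
  moreover have "(\<Sum>j<r. (cmod (A $ ix j $ q))\<^sup>2) \<ge> 0" by (intro sum_nonneg) simp
  ultimately show ?thesis by (simp add: m_def)
qed

lemma Gm_bound:
  assumes on: "orthonormal_fam e CARD('d)" and r: "r < CARD('d)" and W: "unitary W"
    and lam: "cmod lam = 1" and eig: "\<forall>k<r. W *v e k = lam *s e k"
  defines "I \<equiv> PiE {..<CARD('d) - r} (\<lambda>_. {-1, 1::real}) \<times> {..<CARD('d) - r}"
  shows "(\<Sum>x\<in>I. (cmod (mtrace (cadj (Gm e r x) ** W)))\<^sup>2) \<le> real (card I) * ((real r)\<^sup>2 + 1)"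
proof -
  define m where "m = CARD('d) - r"
  define P where "P = PiE {..<m} (\<lambda>_. {-1, 1::real})"
  define A where "A = cadj (Bm e) ** W ** Bm e"
  have uA: "unitary A" unfolding A_def
    using Bm_unitary[OF on] W by (simp add: unitary_mult unitary_cadj)
  define y where "y a i = A $ ix (r + (i + a) mod m) $ ix (r + i)" for a i
  have I: "I = P \<times> {..<m}" by (simp add: I_def P_def m_def)
  have c2: "card {-1, 1::real} = 2" by simp
  have cP: "card P = 2 ^ m" unfolding P_def by (subst card_PiE) (simp_all only: c2 finite_lessThan prod_constant card_lessThan)
  have "(\<Sum>x\<in>I. (cmod (mtrace (cadj (Gm e r x) ** W)))\<^sup>2) =
      (\<Sum>s\<in>P. \<Sum>a<m. (cmod (mtrace (cadj (Gm e r (s, a)) ** W)))\<^sup>2)"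
    unfolding I by (simp add: sum.cartesian_product)
  also have "\<dots> = (\<Sum>a<m. \<Sum>s\<in>P. (cmod (of_nat r * lam + (\<Sum>i<m. of_real (s i) * y a i)))\<^sup>2)"
    by (subst sum.swap) (intro sum.cong refl, simp add: trace_Gm[OF on r eig] m_def y_def A_def)
  also have "\<dots> = (\<Sum>a<m. 2 ^ m * ((real r)\<^sup>2 + (\<Sum>i<m. (cmod (y a i))\<^sup>2)))"
    unfolding P_def by (intro sum.cong refl) (simp add: sign_sum norm_mult lam)
  also have "\<dots> = 2 ^ m * (real m * (real r)\<^sup>2 + (\<Sum>a<m. \<Sum>i<m. (cmod (y a i))\<^sup>2))"
    by (subst sum_distrib_left[symmetric]) (simp add: sum.distrib)
  also have "(\<Sum>a<m. \<Sum>i<m. (cmod (y a i))\<^sup>2) = (\<Sum>i<m. \<Sum>a<m. (cmod (y a i))\<^sup>2)"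
    by (rule sum.swap)
  also have "(\<Sum>i<m. \<Sum>a<m. (cmod (y a i))\<^sup>2) = (\<Sum>i<m. \<Sum>i'<m. (cmod (A $ ix (r + i') $ ix (r + i)))\<^sup>2)"
    unfolding y_def
  proof (rule sum.cong[OF refl])
    fix i assume "i \<in> {..<m}"
    then show "(\<Sum>a<m. (cmod (A $ ix (r + (i + a) mod m) $ ix (r + i)))\<^sup>2) = (\<Sum>i'<m. (cmod (A $ ix (r + i') $ ix (r + i)))\<^sup>2)"
      using shift_sum[of i m "\<lambda>i'. (cmod (A $ ix (r + i') $ ix (r + i)))\<^sup>2"] by simp
  qed
  also have "\<dots> \<le> (\<Sum>i<m. 1)"
    by (intro sum_mono) (use col_bound[OF uA, of r] r in \<open>simp add: m_def\<close>)
  finally have "(\<Sum>x\<in>I. (cmod (mtrace (cadj (Gm e r x) ** W)))\<^sup>2) \<le> 2 ^ m * (real m * (real r)\<^sup>2 + real m)"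
    by simp
  also have "\<dots> = real (card I) * ((real r)\<^sup>2 + 1)"
    by (simp add: I cP card_cartesian_product algebra_simps)
  finally show ?thesis .
qed

end


lemma avg_family:
  fixes \<xi> :: "nat \<Rightarrow> complex^'d::finite"
  assumes on: "orthonormal_fam \<xi> r" and r: "r < CARD('d)"
  shows "\<exists>(I :: ((nat \<Rightarrow> real) \<times> nat) set) (G :: (nat \<Rightarrow> real) \<times> nat \<Rightarrow> complex^'d^'d).
     finite I \<and> I \<noteq> {} \<and> (\<forall>x\<in>I. unitary (G x) \<and> (\<forall>k<r. G x *v \<xi> k = \<xi> k)) \<and>
     (\<forall>W lam. unitary W \<longrightarrow> cmod lam = 1 \<longrightarrow> (\<forall>k<r. W *v \<xi> k = lam *s \<xi> k) \<longrightarrow>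
        (\<Sum>x\<in>I. (cmod (mtrace (cadj (G x) ** W)))\<^sup>2) \<le> real (card I) * ((real r)\<^sup>2 + 1))"
proof -
  obtain e where e: "orthonormal_fam e CARD('d)" "\<forall>k<r. e k = \<xi> k"
    using extend_onb[OF on] r by auto
  obtain idx :: "'d \<Rightarrow> nat" where bij0: "bij_betw idx UNIV {0..<card (UNIV :: 'd set)}"
    using ex_bij_betw_finite_nat[of "UNIV :: 'd set"] by auto
  have bij: "bij_betw idx (UNIV::'d set) {..<CARD('d)}" using bij0 by (simp add: atLeast0LessThan)
  interpret idxloc idx by (rule idxloc.intro[OF bij])
  define I where "I = PiE {..<CARD('d) - r} (\<lambda>_. {-1, 1::real}) \<times> {..<CARD('d) - r}"
  have fI: "finite I" by (simp add: I_def finite_PiE)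
  have ne1: "PiE {..<CARD('d) - r} (\<lambda>_. {-1, 1::real}) \<noteq> {}" by (simp add: PiE_eq_empty_iff)
  have "0 \<in> {..<CARD('d) - r}" using r by simp
  then have ne2: "{..<CARD('d) - r} \<noteq> {}" by blast
  have nI: "I \<noteq> {}" using ne1 ne2 by (simp add: I_def)
  have P1: "\<forall>x\<in>I. unitary (Gm e r x) \<and> (\<forall>k<r. Gm e r x *v \<xi> k = \<xi> k)"
    using Gm_props[OF e(1) r] e(2) by (simp add: I_def)
  have P2: "\<forall>W lam. unitary W \<longrightarrow> cmod lam = 1 \<longrightarrow> (\<forall>k<r. W *v \<xi> k = lam *s \<xi> k) \<longrightarrow>
        (\<Sum>x\<in>I. (cmod (mtrace (cadj (Gm e r x) ** W)))\<^sup>2) \<le> real (card I) * ((real r)\<^sup>2 + 1)"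
    using Gm_bound[OF e(1) r] e(2) by (simp add: I_def)
  show ?thesis using fI nI P1 P2 by blast
qed


lemma risk_bounds:
  fixes U V :: "complex^'d::finite^'d"
  assumes "unitary U" "unitary V"
  shows "0 \<le> risk U V" "risk U V \<le> 1"
proof -
  define d where "d = real CARD('d)"
  define x where "x = cmod (mtrace (cadj U ** V))"
  have d1: "d \<ge> 1" by (simp add: d_def)
  have x0: "0 \<le> x" by (simp add: x_def)
  have "x \<le> d" unfolding x_def d_def
    by (rule unitary_trace_le) (simp add: unitary_mult unitary_cadj assms)
  then have "x\<^sup>2 \<le> d\<^sup>2" using x0 by (simp add: power_mono)
  then have le: "d + x\<^sup>2 \<le> d * (d + 1)" by (simp add: power2_eq_square algebra_simps)
  have pos: "d * (d + 1) > 0" using d1 by simp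
  have r: "risk U V = 1 - (d + x\<^sup>2) / (d * (d + 1))" by (simp add: risk_def d_def x_def)
  show "0 \<le> risk U V" unfolding r using le pos by (simp add: field_simps)
  show "risk U V \<le> 1" unfolding r using pos d1 by (simp add: field_simps)
qed

lemma tens_id_fix:
  assumes "\<forall>k<r. G *v \<xi> k = \<xi> k"
  shows "tens_id G (\<Sum>k<r. tprod (\<xi> k) (w k)) = (\<Sum>k<r. tprod (\<xi> k) (w k))"
  using assms by (simp add: tens_id_sum tens_id_tprod)

lemma training_set_inv:
  fixes \<xi> :: "nat \<Rightarrow> complex^'d::finite"
  assumes fixG: "\<forall>k<r. G *v \<xi> k = \<xi> k"
    and span: "\<forall>j<length \<psi>s. \<exists>w::nat \<Rightarrow> complex^'r::finite. \<psi>s ! j = (\<Sum>k<r. tprod (\<xi> k) (w k))"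
  shows "training_set (U ** G) \<psi>s = training_set U \<psi>s"
proof -
  have "tens_id (U ** G) \<psi> = tens_id U \<psi>" if "\<psi> \<in> set \<psi>s" for \<psi>
  proof -
    obtain j where j: "j < length \<psi>s" "\<psi> = \<psi>s ! j" using \<open>\<psi> \<in> set \<psi>s\<close> by (auto simp: in_set_conv_nth)
    obtain w where w: "\<psi>s ! j = (\<Sum>k<r. tprod (\<xi> k) (w k))" using span j by blast
    have "tens_id G \<psi> = \<psi>" using j(2) w tens_id_fix[OF fixG, of w] by (simp del: tens_id_sum)
    then show ?thesis by (simp add: tens_id_mult)
  qed
  then show ?thesis unfolding training_set_def by simp
qed

lemma mult_right_measurable:
  "(\<lambda>U::complex^'d::finite^'d. U ** G) \<in> borel_measurable borel"
proof (rule borel_measurable_continuous_onI)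
  show "continuous_on UNIV (\<lambda>U::complex^'d^'d. U ** G)"
    unfolding matrix_matrix_mult_def
    by (intro continuous_on_vec_lambda continuous_on_sum continuous_intros)
qed

lemma inner_bound:
  fixes \<mu> :: "(complex^'d::finite^'d) measure"
    and V :: "((complex^('d \<times> 'r::finite)) \<times> (complex^('d \<times> 'r))) list \<Rightarrow> complex^'d^'d"
    and \<psi>s :: "(complex^('d \<times> 'r)) list"
  assumes haar: "haar_unitary \<mu>" and psi: "\<psi>s \<in> T_ld r t"
    and trained: "\<And>U \<psi>s. unitary U \<Longrightarrow> \<psi>s \<in> T_ld r t \<Longrightarrow>
                    unitary (V (training_set U \<psi>s)) \<and>
                    perfectly_trained U (V (training_set U \<psi>s)) \<psi>s"
    and hm: "(\<lambda>U. risk U (V (training_set U \<psi>s))) \<in> borel_measurable \<mu>"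
  shows "1 - (real r ^ 2 + real CARD('d) + 1) / (real CARD('d) * (real CARD('d) + 1))
           \<le> (\<integral>U. risk U (V (training_set U \<psi>s)) \<partial>\<mu>)"
proof -
  define h where "h = (\<lambda>U. risk U (V (training_set U \<psi>s)))"
  define d where "d = real CARD('d)"
  define c where "c = 1 - (real r ^ 2 + d + 1) / (d * (d + 1))"
  have d1: "d \<ge> 1" by (simp add: d_def)
  have P: "prob_space \<mu>" and sets: "sets \<mu> = sets borel" and sp: "space \<mu> = UNIV"
    and AEu: "AE U in \<mu>. unitary U"
    and inv: "\<And>W. unitary W \<Longrightarrow> distr \<mu> borel (\<lambda>U. U ** W) = \<mu>"
    using haar unfolding haar_unitary_def by auto
  interpret P: prob_space \<mu> by (rule P)
  have hm': "h \<in> borel_measurable \<mu>" using hm by (simp add: h_def)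
  have hb: "h \<in> borel_measurable borel" using hm' measurable_cong_sets[OF sets refl] by blast
  have hbound: "0 \<le> h U \<and> h U \<le> 1" if "unitary U" for U
    using risk_bounds[OF that] trained[OF that psi] by (simp add: h_def)
  have hint: "integrable \<mu> h"
    by (rule P.integrable_const_bound[where B=1]) (use AEu hbound hm' in \<open>auto elim!: eventually_mono\<close>)
  show ?thesis
  proof (cases "r < CARD('d)")
    case False
    then have "d \<le> real r" by (simp add: d_def)
    then have "d * d \<le> real r ^ 2" using d1 by (simp add: power2_eq_square mult_mono)
    then have le: "d * (d + 1) \<le> real r ^ 2 + d + 1" by (simp add: algebra_simps)
    have pos: "d * (d + 1) > 0" using d1 by simp
    have "1 \<le> (real r ^ 2 + d + 1) / (d * (d + 1))" using le pos by (simp only: le_divide_eq_1_pos)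
    then have "c \<le> 0" by (simp add: c_def)
    moreover have "0 \<le> integral\<^sup>L \<mu> h"
      by (rule P.integral_ge_const[OF hint]) (use AEu hbound in \<open>auto elim!: eventually_mono\<close>)
    ultimately have "c \<le> integral\<^sup>L \<mu> h" by linarith
    then show ?thesis unfolding c_def d_def h_def .
  next
    case True
    obtain \<xi> :: "nat \<Rightarrow> complex^'d" and \<zeta> :: "nat \<Rightarrow> complex^'r" and cc :: "nat \<Rightarrow> real" where
      T: "orthonormal_fam \<xi> r" "orthonormal_fam \<zeta> r" "\<forall>k<r. cc k > 0"
         "\<psi>s ! 0 = (\<Sum>k<r. sqrt (cc k) *\<^sub>R tprod (\<xi> k) (\<zeta> k))"
         "\<forall>j<t. \<exists>w::nat \<Rightarrow> complex^'r. \<psi>s ! j = (\<Sum>k<r. tprod (\<xi> k) (w k))"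
      using psi unfolding T_ld_def by blast
    have len: "length \<psi>s = t" "t \<ge> 1" and nrm: "\<forall>\<psi>\<in>set \<psi>s. cinner \<psi> \<psi> = 1"
      using psi unfolding T_ld_def by auto
    have in0: "\<psi>s ! 0 \<in> set \<psi>s" using len by auto
    obtain I :: "((nat \<Rightarrow> real) \<times> nat) set" and G where
      fI: "finite I" and nI: "I \<noteq> {}" and GI: "\<forall>x\<in>I. unitary (G x) \<and> (\<forall>k<r. G x *v \<xi> k = \<xi> k)"
      and Gb: "\<forall>W lam. unitary W \<longrightarrow> cmod lam = 1 \<longrightarrow> (\<forall>k<r. W *v \<xi> k = lam *s \<xi> k) \<longrightarrow>
        (\<Sum>x\<in>I. (cmod (mtrace (cadj (G x) ** W)))\<^sup>2) \<le> real (card I) * ((real r)\<^sup>2 + 1)"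
      using avg_family[OF T(1) True] by blast
    define N where "N = real (card I)"
    have N0: "N > 0" using fI nI by (simp add: N_def card_gt_0_iff)
    have Tm: "(\<lambda>U. U ** G x) \<in> measurable \<mu> borel" for x
      using mult_right_measurable measurable_cong_sets[OF sets refl] by blast
    have eqint: "integral\<^sup>L \<mu> h = integral\<^sup>L \<mu> (\<lambda>U. h (U ** G x))" and intx: "integrable \<mu> (\<lambda>U. h (U ** G x))"
      if x: "x \<in> I" for x
    proof -
      have dist: "distr \<mu> borel (\<lambda>U. U ** G x) = \<mu>" using inv GI x by blast
      have "integral\<^sup>L \<mu> h = integral\<^sup>L (distr \<mu> borel (\<lambda>U. U ** G x)) h" by (simp only: dist)
      also have "\<dots> = integral\<^sup>L \<mu> (\<lambda>U. h (U ** G x))" by (rule integral_distr[OF Tm hb])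
      finally show "integral\<^sup>L \<mu> h = integral\<^sup>L \<mu> (\<lambda>U. h (U ** G x))" .
      have "integrable (distr \<mu> borel (\<lambda>U. U ** G x)) h" by (simp only: dist hint)
      then show "integrable \<mu> (\<lambda>U. h (U ** G x))" by (simp add: integrable_distr_eq[OF Tm hb])
    qed
    have pw: "N * c \<le> (\<Sum>x\<in>I. h (U ** G x))" if U: "unitary U" for U
    proof -
      define VU where "VU = V (training_set U \<psi>s)"
      have VU: "unitary VU" "perfectly_trained U VU \<psi>s" using trained[OF U psi] by (auto simp: VU_def)
      define W where "W = cadj U ** VU"
      have uW: "unitary W" using U VU by (simp add: W_def unitary_mult unitary_cadj)
      have "cmod (cinner (\<psi>s ! 0) (tens_id W (\<psi>s ! 0))) = 1"
        using VU(2) in0 unfolding perfectly_trained_def W_def by blast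
      then obtain lam where lam: "cmod lam = 1" "\<forall>k<r. W *v \<xi> k = lam *s \<xi> k"
        using perfect_eig[OF uW T(2) T(3) T(4)] nrm in0 by blast
      have tr: "(\<Sum>x\<in>I. (cmod (mtrace (cadj (G x) ** W)))\<^sup>2) \<le> N * ((real r)\<^sup>2 + 1)"
        using Gb uW lam by (simp add: N_def)
      have hx: "h (U ** G x) = 1 - (d + (cmod (mtrace (cadj (G x) ** W)))\<^sup>2) / (d * (d + 1))" if x: "x \<in> I" for x
      proof -
        have "training_set (U ** G x) \<psi>s = training_set U \<psi>s"
          by (rule training_set_inv) (use GI x T(5) len in auto)
        then show ?thesis
          by (simp add: h_def risk_def d_def W_def VU_def cadj_mult matrix_mul_assoc)
      qed
      have "(\<Sum>x\<in>I. h (U ** G x)) = N - (N * d + (\<Sum>x\<in>I. (cmod (mtrace (cadj (G x) ** W)))\<^sup>2)) / (d * (d + 1))"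
        by (simp add: hx sum_subtractf sum_divide_distrib[symmetric] sum.distrib N_def)
      also have "\<dots> \<ge> N - (N * d + N * ((real r)\<^sup>2 + 1)) / (d * (d + 1))"
        using tr d1 by (simp add: divide_right_mono)
      also have "N - (N * d + N * ((real r)\<^sup>2 + 1)) / (d * (d + 1)) = N * c"
        by (simp add: c_def algebra_simps add_divide_distrib)
      finally show ?thesis by simp
    qed
    have "N * c \<le> integral\<^sup>L \<mu> (\<lambda>U. \<Sum>x\<in>I. h (U ** G x))"
      by (rule P.integral_ge_const) (use intx pw AEu in \<open>auto elim!: eventually_mono\<close>)
    also have "\<dots> = (\<Sum>x\<in>I. integral\<^sup>L \<mu> (\<lambda>U. h (U ** G x)))"
      by (rule Bochner_Integration.integral_sum) (simp add: intx)
    also have "\<dots> = (\<Sum>x\<in>I. integral\<^sup>L \<mu> h)" using eqint by simp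
    also have "\<dots> = N * integral\<^sup>L \<mu> h" by (simp add: N_def)
    finally have "c \<le> integral\<^sup>L \<mu> h" using N0 by simp
    then show ?thesis unfolding c_def d_def h_def .
  qed
qed


theorem mainTheorem3:
  fixes \<mu> :: "(complex^'d::finite^'d) measure"
    and M :: "((complex^('d \<times> 'r::finite)) list) measure"
    and V :: "((complex^('d \<times> 'r)) \<times> (complex^('d \<times> 'r))) list \<Rightarrow> complex^'d^'d"
    and r t :: nat
  assumes haar: "haar_unitary \<mu>"
    and probM: "prob_space M"
    and supp: "space M \<subseteq> T_ld r t"
    and trained: "\<And>U \<psi>s. unitary U \<Longrightarrow> \<psi>s \<in> T_ld r t \<Longrightarrow>
                    unitary (V (training_set U \<psi>s)) \<and>
                    perfectly_trained U (V (training_set U \<psi>s)) \<psi>s"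
    and meas: "(\<lambda>(\<psi>s, U). risk U (V (training_set U \<psi>s))) \<in> borel_measurable (M \<Otimes>\<^sub>M \<mu>)"
  shows "(\<integral>U. (\<integral>\<psi>s. risk U (V (training_set U \<psi>s)) \<partial>M) \<partial>\<mu>)
           \<ge> 1 - (real r ^ 2 + real CARD('d) + 1) / (real CARD('d) * (real CARD('d) + 1))"
proof -
  define c where "c = 1 - (real r ^ 2 + real CARD('d) + 1) / (real CARD('d) * (real CARD('d) + 1))"
  have Pmu: "prob_space \<mu>" and AEu: "AE U in \<mu>. unitary U"
    using haar unfolding haar_unitary_def by auto
  interpret M: prob_space M by (rule probM)
  interpret Mu: prob_space \<mu> by (rule Pmu)
  interpret PP: pair_prob_space M \<mu> by unfold_locales
  define F where "F = (\<lambda>(\<psi>s, U). risk U (V (training_set U \<psi>s)))"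
  have Fm[measurable]: "F \<in> borel_measurable (M \<Otimes>\<^sub>M \<mu>)" using meas by (simp add: F_def)
  have AEF: "AE z in M \<Otimes>\<^sub>M \<mu>. norm (F z) \<le> 1"
  proof (rule PP.AE_pair_measure)
    show "{x \<in> space (M \<Otimes>\<^sub>M \<mu>). norm (F x) \<le> 1} \<in> sets (M \<Otimes>\<^sub>M \<mu>)" by measurable
    show "AE x in M. AE y in \<mu>. norm (F (x, y)) \<le> 1"
    proof (rule AE_I2)
      fix x assume "x \<in> space M"
      then have x: "x \<in> T_ld r t" using supp by blast
      show "AE y in \<mu>. norm (F (x, y)) \<le> 1"
        using AEu
      proof (rule eventually_mono)
        fix U :: "complex^'d^'d" assume U: "unitary U"
        have "unitary (V (training_set U x))" using trained[OF U x] by blast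
        then show "norm (F (x, U)) \<le> 1" using risk_bounds[OF U] by (simp add: F_def)
      qed
    qed
  qed
  have intF: "integrable (M \<Otimes>\<^sub>M \<mu>) F"
    by (rule PP.P.integrable_const_bound[OF AEF Fm])
  have intF': "integrable (M \<Otimes>\<^sub>M \<mu>) (case_prod (\<lambda>\<psi>s U. risk U (V (training_set U \<psi>s))))"
    using intF by (simp add: F_def)
  have "(\<integral>U. (\<integral>\<psi>s. risk U (V (training_set U \<psi>s)) \<partial>M) \<partial>\<mu>)
      = (\<integral>\<psi>s. (\<integral>U. risk U (V (training_set U \<psi>s)) \<partial>\<mu>) \<partial>M)"
    by (rule PP.Fubini_integral[OF intF'])
  also have "\<dots> \<ge> c"
  proof (rule M.integral_ge_const)
    show "integrable M (\<lambda>\<psi>s. \<integral>U. risk U (V (training_set U \<psi>s)) \<partial>\<mu>)"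
      using PP.integrable_fst'[OF intF] by (simp add: F_def)
    show "AE \<psi>s in M. c \<le> (\<integral>U. risk U (V (training_set U \<psi>s)) \<partial>\<mu>)"
    proof (rule AE_I2)
      fix x assume xs: "x \<in> space M"
      then have x: "x \<in> T_ld r t" using supp by blast
      have hm: "(\<lambda>U. risk U (V (training_set U x))) \<in> borel_measurable \<mu>"
        using measurable_Pair2[OF meas xs] by simp
      show "c \<le> (\<integral>U. risk U (V (training_set U x)) \<partial>\<mu>)"
        unfolding c_def by (rule inner_bound[OF haar x trained hm])
    qed
  qed
  finally show ?thesis by (simp add: c_def)
qed


end
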